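(* Consider the setting of Proposition 4 and let $\mu(m)$ be the unique solution in $I$ of $G(\mu)=x$ with $x=\nu m/K$, for $m>0$ such that $x$ lies in the interior of $X$; let $p(m)=m/\mu(m)$ and $q(m)=\frac{1-\beta-\mu(m)}{\alpha(1-\sigma(1-\mu(m)))}$. If $\alpha(1-\beta\sigma)>0$, the markup $1/\mu(m)$ is strictly decreasing in $m$; if $\alpha(1-\beta\sigma)<0$, it is strictly increasing in $m$. In all cases $p(m)$ is strictly increasing and $q(m)$ strictly decreasing in $m$. If $\alpha=0$ (with $\beta\in(0,1)$) or $\beta=\frac1\sigma$ (with $\sigma>1$), the markup is constant in $m$ ($p(m)=\frac m{1-\beta}$, resp. $p(m)=\frac{\sigma m}{\sigma-1}$), the price is strictly increasing and the quantity $q(m)$ solving $u'(q)=\nu p(m)$ is strictly decreasing in $m$.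
   Context: Monopolistic competition setting: a firm with marginal cost $m>0$ faces inverse demand $p=u'(q)/\nu$ ($\nu>0$ fixed) with LFRRA utility, $-qu''(q)/u'(q)=\frac{\alpha q+\beta}{\alpha\sigma q+1}$ and $u'(q)=K(1+\alpha\sigma q)^{\beta-\frac1\sigma}q^{-\beta}$, $K>0$; $\mu=m/p$ is the inverse markup. $G$, $I$, $X$ are as follows (with $\Delta=\sqrt{(1-\beta)(1-\beta\sigma)}$): $G(\mu)=\mu[\frac{1-\beta\sigma}{1-\sigma(1-\mu)}]^{\beta-\frac1\sigma}[\frac{1-\beta-\mu}{\alpha(1-\sigma(1-\mu))}]^{-\beta}$ for $\sigma\neq0$ and $G(\mu)=\mu e^{-(1-\beta-\mu)}(\frac{1-\beta-\mu}{\alpha})^{-\beta}$ for $\sigma=0$. Case 1a ($\alpha>0$, $1-\beta\sigma>0$): $\beta\in(0,1)$: $X=(0,\infty)$, $I=(0,1-\beta)$ ($\sigma\le1$) or $(\frac{\sigma-1}\sigma,1-\beta)$ ($\sigma>1$); $\beta=0$: $X=(0,1]$, $I=(0,1]$ ($\sigma\le1$) or $(\frac{\sigma-1}\sigma,1]$ ($\sigma>1$). Case 1b ($\alpha>0$, $1-\beta\sigma<0$): $\beta\in(0,1)$: $X=(0,\infty)$, $I=(1-\beta,\frac{\sigma-1}\sigma)$; $\beta=1$: $X=(0,\alpha(\sigma-1))$, $I=(0,\frac{\sigma-1}\sigma)$. Case 2a ($\alpha<0$, $1-\beta\sigma>0$, $\beta\in(0,1)$): $I=(1-\beta,\bar\mu)$,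 $\bar\mu=\frac{(1-\beta)\sigma+\Delta}{(1-\beta)\sigma+1}$, $X=(\lim_{\mu\to\bar\mu^-}G(\mu),\infty)$. Case 2b ($\alpha<0$, $1-\beta\sigma<0$, $\beta\in(0,1)$): $X=(0,\infty)$, $I=(0,1-\beta)$. In each case $G(\mu)=x$ has a unique solution in $I$ for $x\in X$. *)

theory Defs
  imports "HOL-Analysis.Analysis"
begin

text \<open>Real power with the mathematical convention b^0 = 1 (Isabelle has 0 powr 0 = 0).
  All other uses have strictly positive bases.\<close>
definition rpow :: "real \<Rightarrow> real \<Rightarrow> real" where
  "rpow b e = (if e = 0 then 1 else b powr e)"

definition Gfun :: "real \<Rightarrow> real \<Rightarrow> real \<Rightarrow> real \<Rightarrow> real" where
  "Gfun \<alpha> \<beta> \<sigma> \<mu> =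
     (if \<sigma> \<noteq> 0 then
        \<mu> * rpow ((1 - \<beta> * \<sigma>) / (1 - \<sigma> * (1 - \<mu>))) (\<beta> - 1 / \<sigma>)
          * rpow ((1 - \<beta> - \<mu>) / (\<alpha> * (1 - \<sigma> * (1 - \<mu>)))) (- \<beta>)
      else \<mu> * exp (- (1 - \<beta> - \<mu>)) * rpow ((1 - \<beta> - \<mu>) / \<alpha>) (- \<beta>))"

definition case1a :: "real \<Rightarrow> real \<Rightarrow> real \<Rightarrow> bool" where
  "case1a \<alpha> \<beta> \<sigma> \<longleftrightarrow> \<alpha> > 0 \<and> 1 - \<beta> * \<sigma> > 0 \<and> 0 \<le> \<beta> \<and> \<beta> < 1"

definition case1b :: "real \<Rightarrow> real \<Rightarrow> real \<Rightarrow> bool" where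
  "case1b \<alpha> \<beta> \<sigma> \<longleftrightarrow> \<alpha> > 0 \<and> 1 - \<beta> * \<sigma> < 0 \<and> 0 < \<beta> \<and> \<beta> \<le> 1"

definition case2a :: "real \<Rightarrow> real \<Rightarrow> real \<Rightarrow> bool" where
  "case2a \<alpha> \<beta> \<sigma> \<longleftrightarrow> \<alpha> < 0 \<and> 1 - \<beta> * \<sigma> > 0 \<and> 0 < \<beta> \<and> \<beta> < 1"

definition case2b :: "real \<Rightarrow> real \<Rightarrow> real \<Rightarrow> bool" where
  "case2b \<alpha> \<beta> \<sigma> \<longleftrightarrow> \<alpha> < 0 \<and> 1 - \<beta> * \<sigma> < 0 \<and> 0 < \<beta> \<and> \<beta> < 1"

definition prop4_setting :: "real \<Rightarrow> real \<Rightarrow> real \<Rightarrow> bool" where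
  "prop4_setting \<alpha> \<beta> \<sigma> \<longleftrightarrow>
     case1a \<alpha> \<beta> \<sigma> \<or> case1b \<alpha> \<beta> \<sigma> \<or> case2a \<alpha> \<beta> \<sigma> \<or> case2b \<alpha> \<beta> \<sigma>"

definition mubar :: "real \<Rightarrow> real \<Rightarrow> real" where
  "mubar \<beta> \<sigma> = ((1 - \<beta>) * \<sigma> + sqrt ((1 - \<beta>) * (1 - \<beta> * \<sigma>))) / ((1 - \<beta>) * \<sigma> + 1)"

definition Iset :: "real \<Rightarrow> real \<Rightarrow> real \<Rightarrow> real set" where
  "Iset \<alpha> \<beta> \<sigma> =
     (if case1a \<alpha> \<beta> \<sigma> then
        (if \<beta> > 0 then (if \<sigma> \<le> 1 then {0<..<1 - \<beta>} else {(\<sigma> - 1) / \<sigma><..<1 - \<beta>})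
         else (if \<sigma> \<le> 1 then {0<..1} else {(\<sigma> - 1) / \<sigma><..1}))
      else if case1b \<alpha> \<beta> \<sigma> then
        (if \<beta> < 1 then {1 - \<beta><..<(\<sigma> - 1) / \<sigma>} else {0<..<(\<sigma> - 1) / \<sigma>})
      else if case2a \<alpha> \<beta> \<sigma> then {1 - \<beta><..<mubar \<beta> \<sigma>}
      else if case2b \<alpha> \<beta> \<sigma> then {0<..<1 - \<beta>}
      else {})"

definition Xset :: "real \<Rightarrow> real \<Rightarrow> real \<Rightarrow> real set" where
  "Xset \<alpha> \<beta> \<sigma> =
     (if case1a \<alpha> \<beta> \<sigma> then (if \<beta> > 0 then {0<..} else {0<..1})
      else if case1b \<alpha> \<beta> \<sigma> then (if \<beta> < 1 then {0<..} else {0<..<\<alpha> * (\<sigma> - 1)})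
      else if case2a \<alpha> \<beta> \<sigma> then {Lim (at_left (mubar \<beta> \<sigma>)) (Gfun \<alpha> \<beta> \<sigma>)<..}
      else if case2b \<alpha> \<beta> \<sigma> then {0<..}
      else {})"

definition qfun :: "real \<Rightarrow> real \<Rightarrow> real \<Rightarrow> real \<Rightarrow> real" where
  "qfun \<alpha> \<beta> \<sigma> \<mu> = (1 - \<beta> - \<mu>) / (\<alpha> * (1 - \<sigma> * (1 - \<mu>)))"

text \<open>Marginal utility u'(q) (sigma = 0: limiting form K exp(-alpha q) q^(-beta)).\<close>
definition uprime :: "real \<Rightarrow> real \<Rightarrow> real \<Rightarrow> real \<Rightarrow> real \<Rightarrow> real" where
  "uprime K \<alpha> \<beta> \<sigma> q =
     (if \<sigma> \<noteq> 0 then K * rpow (1 + \<alpha> * \<sigma> * q) (\<beta> - 1 / \<sigma>) * rpow q (- \<beta>)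
      else K * exp (- \<alpha> * q) * rpow q (- \<beta>))"

text \<open>Relative risk aversion r(q) = -q u''(q)/u'(q).\<close>
definition rra :: "real \<Rightarrow> real \<Rightarrow> real \<Rightarrow> real \<Rightarrow> real" where
  "rra \<alpha> \<beta> \<sigma> q = (\<alpha> * q + \<beta>) / (\<alpha> * \<sigma> * q + 1)"

end

theory Submission
  imports Defs
begin


definition Dd :: "real \<Rightarrow> real \<Rightarrow> real" where "Dd \<sigma> \<mu> = 1 - \<sigma> * (1 - \<mu>)"

definition Hf :: "real \<Rightarrow> real \<Rightarrow> real \<Rightarrow> real \<Rightarrow> real" where
 "Hf \<alpha> \<beta> \<sigma> \<mu> = ln \<mu> + (if \<sigma> \<noteq> 0 then (\<beta> - 1/\<sigma>) * ln ((1 - \<beta>*\<sigma>) / (1 - \<sigma> * (1 - \<mu>))) else - (1 - \<beta> - \<mu>))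
     - \<beta> * ln ((1 - \<beta> - \<mu>) / (\<alpha> * (1 - \<sigma> * (1 - \<mu>))))"

lemma rpow_exp: "b > 0 \<or> e = 0 \<Longrightarrow> rpow b e = exp (e * ln b)"
  by (auto simp: rpow_def powr_def)

lemma ln_quot_deriv:
  fixes f g :: "real \<Rightarrow> real"
  assumes "DERIV f x :> f'" "DERIV g x :> g'" "f x / g x > 0"
  shows "DERIV (\<lambda>x. ln (f x / g x)) x :> f' / f x - g' / g x"
proof -
  have ne: "f x \<noteq> 0" "g x \<noteq> 0" using assms(3) by auto
  have "DERIV (\<lambda>x. ln (f x / g x)) x :> inverse (f x / g x) * ((f' * g x - f x * g') / (g x * g x))"
    by (rule DERIV_chain2[OF DERIV_ln[OF assms(3)] DERIV_divide[OF assms(1,2) ne(2)]])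
  moreover have "inverse (f x / g x) * ((f' * g x - f x * g') / (g x * g x)) = f' / f x - g' / g x"
    using ne by (simp add: field_simps)
  ultimately show ?thesis by simp
qed

lemma G_eq:
  assumes "\<mu> > 0" "\<sigma> \<noteq> 0 \<longrightarrow> (1 - \<beta>*\<sigma>) / Dd \<sigma> \<mu> > 0"
    "\<beta> = 0 \<or> (1 - \<beta> - \<mu>) / (\<alpha> * Dd \<sigma> \<mu>) > 0"
  shows "Gfun \<alpha> \<beta> \<sigma> \<mu> = exp (Hf \<alpha> \<beta> \<sigma> \<mu>)"
proof (cases "\<sigma> = 0")
  case True
  then have "rpow ((1 - \<beta> - \<mu>) / \<alpha>) (- \<beta>) = exp (- \<beta> * ln ((1 - \<beta> - \<mu>) / \<alpha>))"
    using assms(3) by (intro rpow_exp) (auto simp: Dd_def)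
  then show ?thesis using True assms(1) by (simp add: Gfun_def Hf_def exp_add exp_diff exp_minus field_simps)
next
  case False
  have 1: "rpow ((1 - \<beta> - \<mu>) / (\<alpha> * (1 - \<sigma> * (1 - \<mu>)))) (- \<beta>) = exp (- \<beta> * ln ((1 - \<beta> - \<mu>) / (\<alpha> * (1 - \<sigma> * (1 - \<mu>)))))"
    using assms(3) by (intro rpow_exp) (auto simp: Dd_def)
  have 2: "rpow ((1 - \<beta>*\<sigma>) / (1 - \<sigma> * (1 - \<mu>))) (\<beta> - 1/\<sigma>) = exp ((\<beta> - 1/\<sigma>) * ln ((1 - \<beta>*\<sigma>) / (1 - \<sigma> * (1 - \<mu>))))"
    using assms(2) False by (intro rpow_exp) (auto simp: Dd_def)
  show ?thesis using False assms(1) unfolding Gfun_def Hf_def 1 2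
    by (simp add: exp_add exp_diff exp_minus divide_inverse)
qed

lemma H_deriv:
  assumes "\<mu> > 0" "Dd \<sigma> \<mu> \<noteq> 0" "\<sigma> \<noteq> 0 \<longrightarrow> (1 - \<beta>*\<sigma>) / Dd \<sigma> \<mu> > 0"
    "\<beta> = 0 \<or> ((1 - \<beta> - \<mu>) / (\<alpha> * Dd \<sigma> \<mu>) > 0 \<and> 1 - \<beta> - \<mu> \<noteq> 0 \<and> \<alpha> \<noteq> 0)"
  shows "DERIV (Hf \<alpha> \<beta> \<sigma>) \<mu> :> 1/\<mu> + 1 / Dd \<sigma> \<mu> + \<beta> / (1 - \<beta> - \<mu>)"
proof (cases "\<beta> = 0")
  case True
  show ?thesis
  proof (cases "\<sigma> = 0")
    case True
    have e: "Hf \<alpha> \<beta> \<sigma> = (\<lambda>\<mu>. ln \<mu> - (1 - \<mu>))" using True \<open>\<beta>=0\<close> by (auto simp: Hf_def fun_eq_iff)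
    show ?thesis unfolding e using assms \<open>\<beta>=0\<close> True
      by (auto intro!: derivative_eq_intros simp: Dd_def)
  next
    case False
    have e: "Hf \<alpha> \<beta> \<sigma> = (\<lambda>\<mu>. ln \<mu> + (- 1/\<sigma>) * ln (1 / (1 - \<sigma> * (1 - \<mu>))))" using False \<open>\<beta>=0\<close> by (auto simp: Hf_def fun_eq_iff)
    have p: "1 / (1 - \<sigma> * (1 - \<mu>)) > 0" using assms(3) False \<open>\<beta>=0\<close> by (simp add: Dd_def)
    show ?thesis unfolding e using assms \<open>\<beta>=0\<close> False p
      apply -
      apply (rule derivative_eq_intros refl | simp)+
      apply (simp add: Dd_def field_simps)
      done
  qed
next
  case False
  then have a: "(1 - \<beta> - \<mu>) / (\<alpha> * Dd \<sigma> \<mu>) > 0" "1 - \<beta> - \<mu> \<noteq> 0" "\<alpha> \<noteq> 0" using assms(4) by auto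
  show ?thesis
  proof (cases "\<sigma> = 0")
    case True
    have e: "Hf \<alpha> \<beta> \<sigma> = (\<lambda>\<mu>. ln \<mu> - (1 - \<beta> - \<mu>) - \<beta> * ln ((1 - \<beta> - \<mu>) / (\<alpha> * 1)))" using True by (auto simp: Hf_def fun_eq_iff)
    show ?thesis unfolding e using assms a True
      apply -
      apply (rule derivative_eq_intros refl | simp add: Dd_def)+
      done
  next
    case False
    have e: "Hf \<alpha> \<beta> \<sigma> = (\<lambda>\<mu>. ln \<mu> + (\<beta> - 1/\<sigma>) * ln ((1 - \<beta>*\<sigma>) / (1 - \<sigma> * (1 - \<mu>))) - \<beta> * ln ((1 - \<beta> - \<mu>) / (\<alpha> * (1 - \<sigma> * (1 - \<mu>)))))" using False by (auto simp: Hf_def fun_eq_iff)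
    have d1: "1 - \<sigma> * (1 - \<mu>) \<noteq> 0" using assms(2) by (simp add: Dd_def)
    have p1: "(1 - \<beta>*\<sigma>) / (1 - \<sigma> * (1 - \<mu>)) > 0" using assms(3) False by (simp add: Dd_def)
    have p2: "(1 - \<beta> - \<mu>) / (\<alpha> * (1 - \<sigma> * (1 - \<mu>))) > 0" using a by (simp add: Dd_def)
    have b1: "1 - \<beta>*\<sigma> \<noteq> 0" using p1 by auto
    have s1: "1 - \<beta> - \<mu> \<noteq> 0" using a by auto
    have D1: "DERIV (\<lambda>\<mu>. ln ((1 - \<beta>*\<sigma>) / (1 - \<sigma> * (1 - \<mu>)))) \<mu> :> - \<sigma> / (1 - \<sigma> * (1 - \<mu>))"
      using ln_quot_deriv[of "\<lambda>_. 1 - \<beta>*\<sigma>" 0 \<mu> "\<lambda>\<mu>. 1 - \<sigma> * (1 - \<mu>)" \<sigma>] p1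
      by (auto intro!: derivative_eq_intros)
    have D2: "DERIV (\<lambda>\<mu>. ln ((1 - \<beta> - \<mu>) / (\<alpha> * (1 - \<sigma> * (1 - \<mu>))))) \<mu> :> - 1 / (1 - \<beta> - \<mu>) - \<sigma> / (1 - \<sigma> * (1 - \<mu>))"
    proof -
      have "DERIV (\<lambda>\<mu>. ln ((1 - \<beta> - \<mu>) / (\<alpha> * (1 - \<sigma> * (1 - \<mu>))))) \<mu> :> -1 / (1 - \<beta> - \<mu>) - (\<alpha>*\<sigma>) / (\<alpha> * (1 - \<sigma> * (1 - \<mu>)))"
        by (rule ln_quot_deriv) (auto intro!: derivative_eq_intros simp: p2)
      moreover have "(\<alpha>*\<sigma>) / (\<alpha> * (1 - \<sigma> * (1 - \<mu>))) = \<sigma> / (1 - \<sigma> * (1 - \<mu>))" using a(3) by simp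
      ultimately show ?thesis by simp
    qed
    have "DERIV (\<lambda>\<mu>. ln \<mu> + (\<beta> - 1/\<sigma>) * ln ((1 - \<beta>*\<sigma>) / (1 - \<sigma> * (1 - \<mu>))) - \<beta> * ln ((1 - \<beta> - \<mu>) / (\<alpha> * (1 - \<sigma> * (1 - \<mu>))))) \<mu>
       :> 1/\<mu> + (\<beta> - 1/\<sigma>) * (- \<sigma> / (1 - \<sigma> * (1 - \<mu>))) - \<beta> * (- 1 / (1 - \<beta> - \<mu>) - \<sigma> / (1 - \<sigma> * (1 - \<mu>)))"
      using assms(1) by (intro DERIV_diff DERIV_add DERIV_cmult D1 D2 DERIV_ln_divide)
    moreover have "1/\<mu> + (\<beta> - 1/\<sigma>) * (- \<sigma> / (1 - \<sigma> * (1 - \<mu>))) - \<beta> * (- 1 / (1 - \<beta> - \<mu>) - \<sigma> / (1 - \<sigma> * (1 - \<mu>)))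
       = 1/\<mu> + 1 / Dd \<sigma> \<mu> + \<beta> / (1 - \<beta> - \<mu>)"
    proof -
      have "\<And>d s. d \<noteq> 0 \<Longrightarrow> s \<noteq> 0 \<Longrightarrow> 1/\<mu> + (\<beta> - 1/\<sigma>) * (- \<sigma> / d) - \<beta> * (- 1 / s - \<sigma> / d) = 1/\<mu> + 1/d + \<beta>/s"
        using False by (simp add: field_simps)
      from this[OF d1 s1] show ?thesis unfolding Dd_def .
    qed
    ultimately show ?thesis unfolding e by (rule back_subst)
  qed
qed




lemma strict_mono_deriv:
  fixes f :: "real \<Rightarrow> real"
  assumes conv: "\<And>x y z. x\<in>S \<Longrightarrow> z\<in>S \<Longrightarrow> x\<le>y \<Longrightarrow> y\<le>z \<Longrightarrow> y\<in>S"
    and der: "\<And>x. x \<in> S \<Longrightarrow> DERIV f x :> f' x" and pos: "\<And>x. x \<in> S \<Longrightarrow> f' x > 0"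
    and "a \<in> S" "b \<in> S" "a < b"
  shows "f a < f b"
proof (rule DERIV_pos_imp_increasing[OF \<open>a < b\<close>])
  fix x assume "a \<le> x" "x \<le> b"
  then have "x \<in> S" by (rule conv[OF assms(4,5)])
  then show "\<exists>y. DERIV f x :> y \<and> y > 0" using der[of x] pos[of x] by (intro exI conjI)
qed

lemma strict_anti_deriv:
  fixes f :: "real \<Rightarrow> real"
  assumes conv: "\<And>x y z. x\<in>S \<Longrightarrow> z\<in>S \<Longrightarrow> x\<le>y \<Longrightarrow> y\<le>z \<Longrightarrow> y\<in>S"
    and der: "\<And>x. x \<in> S \<Longrightarrow> DERIV f x :> f' x" and pos: "\<And>x. x \<in> S \<Longrightarrow> f' x < 0"
    and "a \<in> S" "b \<in> S" "a < b"
  shows "f b < f a"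
proof -
  have "(\<lambda>x. - f x) a < (\<lambda>x. - f x) b"
  proof (rule strict_mono_deriv[of S "\<lambda>x. - f x" "\<lambda>x. - f' x"])
    show "\<And>x y z. x\<in>S \<Longrightarrow> z\<in>S \<Longrightarrow> x\<le>y \<Longrightarrow> y\<le>z \<Longrightarrow> y\<in>S" by (rule conv)
    show "\<And>x. x \<in> S \<Longrightarrow> DERIV (\<lambda>x. - f x) x :> - f' x" by (rule DERIV_minus) (rule der)
    show "\<And>x. x \<in> S \<Longrightarrow> - f' x > 0" using pos by simp
    show "a \<in> S" "b \<in> S" "a < b" by (fact assms)+
  qed
  then show ?thesis by simp
qed




lemma Hp_eq:
  assumes "\<mu> \<noteq> 0" "Dd \<sigma> \<mu> \<noteq> 0" "1 - \<beta> - \<mu> \<noteq> 0"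
  shows "1/\<mu> + 1/Dd \<sigma> \<mu> + \<beta>/(1-\<beta>-\<mu>) =
    (- ((1-\<beta>)*\<sigma>+1)*(1-\<mu>)^2 + 2*(1-\<mu>) - \<beta>) / (\<mu>*(1-\<beta>-\<mu>)*Dd \<sigma> \<mu>)"
proof -
  have "1/\<mu> + 1/Dd \<sigma> \<mu> + \<beta>/(1-\<beta>-\<mu>) = ((1-\<beta>-\<mu>)*Dd \<sigma> \<mu> + \<mu>*(1-\<beta>-\<mu>) + \<beta>*\<mu>*Dd \<sigma> \<mu>) / (\<mu>*(1-\<beta>-\<mu>)*Dd \<sigma> \<mu>)"
    using assms by (simp add: field_simps)
  also have "(1-\<beta>-\<mu>)*Dd \<sigma> \<mu> + \<mu>*(1-\<beta>-\<mu>) + \<beta>*\<mu>*Dd \<sigma> \<mu> = - ((1-\<beta>)*\<sigma>+1)*(1-\<mu>)^2 + 2*(1-\<mu>) - \<beta>"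
    unfolding Dd_def by algebra
  finally show ?thesis .
qed

lemma H2p_eq:
  assumes "Dd \<sigma> \<mu> \<noteq> 0" "1 - \<beta> - \<mu> \<noteq> 0"
  shows "1/Dd \<sigma> \<mu> + \<beta>/(1-\<beta>-\<mu>) = (1-\<beta>*\<sigma>)*(1-\<mu>) / ((1-\<beta>-\<mu>)*Dd \<sigma> \<mu>)"
proof -
  have "1/Dd \<sigma> \<mu> + \<beta>/(1-\<beta>-\<mu>) = ((1-\<beta>-\<mu>) + \<beta>*Dd \<sigma> \<mu>) / ((1-\<beta>-\<mu>)*Dd \<sigma> \<mu>)"
    using assms by (simp add: field_simps)
  also have "(1-\<beta>-\<mu>) + \<beta>*Dd \<sigma> \<mu> = (1-\<beta>*\<sigma>)*(1-\<mu>)"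
    unfolding Dd_def by algebra
  finally show ?thesis .
qed

definition facts :: "real \<Rightarrow> real \<Rightarrow> real \<Rightarrow> real \<Rightarrow> bool" where
 "facts \<alpha> \<beta> \<sigma> \<mu> \<longleftrightarrow> \<mu> > 0 \<and> Dd \<sigma> \<mu> \<noteq> 0 \<and> (\<sigma> \<noteq> 0 \<longrightarrow> (1-\<beta>*\<sigma>)/Dd \<sigma> \<mu> > 0)
     \<and> (\<beta> = 0 \<or> ((1-\<beta>-\<mu>)/(\<alpha>*Dd \<sigma> \<mu>) > 0 \<and> 1-\<beta>-\<mu> \<noteq> 0 \<and> \<alpha> \<noteq> 0))
     \<and> (\<alpha>*(1-\<beta>*\<sigma>) > 0 \<longrightarrow> 1/\<mu> + 1/Dd \<sigma> \<mu> + \<beta>/(1-\<beta>-\<mu>) > 0 \<and> 1/Dd \<sigma> \<mu> + \<beta>/(1-\<beta>-\<mu>) > 0)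
     \<and> (\<alpha>*(1-\<beta>*\<sigma>) < 0 \<longrightarrow> 1/\<mu> + 1/Dd \<sigma> \<mu> + \<beta>/(1-\<beta>-\<mu>) < 0)"

lemma facts_1a:
  assumes c: "case1a \<alpha> \<beta> \<sigma>" and I: "\<mu> \<in> Iset \<alpha> \<beta> \<sigma>"
  shows "facts \<alpha> \<beta> \<sigma> \<mu> \<and> Dd \<sigma> \<mu> > 0"
proof -
  have a: "\<alpha> > 0" "1 - \<beta>*\<sigma> > 0" "0 \<le> \<beta>" "\<beta> < 1" using c by (auto simp: case1a_def)
  have m: "\<mu> > 0" "\<mu> \<le> 1" "\<beta> > 0 \<longrightarrow> \<mu> < 1 - \<beta>" "\<sigma> > 1 \<longrightarrow> \<mu> > (\<sigma>-1)/\<sigma>"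
  proof -
    have sp: "\<sigma> > 1 \<longrightarrow> 0 < (\<sigma>-1)/\<sigma>" by auto
    show "\<mu> > 0" "\<mu> \<le> 1" "\<beta> > 0 \<longrightarrow> \<mu> < 1 - \<beta>" "\<sigma> > 1 \<longrightarrow> \<mu> > (\<sigma>-1)/\<sigma>"
      using I c a unfolding Iset_def by (auto split: if_splits) (use sp in linarith)+
  qed
  have D: "Dd \<sigma> \<mu> > 0"
  proof (cases "\<sigma> > 1")
    case True
    then have "\<sigma> * \<mu> > \<sigma> - 1" using m(4) by (simp add: field_simps)
    then show ?thesis by (simp add: Dd_def algebra_simps)
  next
    case False
    show ?thesis
    proof (cases "\<sigma> \<ge> 0")
      case True
      then show ?thesis using False m(1,2) unfolding Dd_def
        by (cases "\<sigma> = 1") (auto simp: algebra_simps, smt (verit) mult_nonneg_nonneg)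
    next
      case False
      then have "\<sigma> * (1 - \<mu>) \<le> 0" using m(2) by (simp add: mult_nonpos_nonneg)
      then show ?thesis by (simp add: Dd_def)
    qed
  qed
  have s: "\<beta>/(1-\<beta>-\<mu>) \<ge> 0" using m a by (cases "\<beta> = 0") auto
  have f4: "\<beta> = 0 \<or> ((1-\<beta>-\<mu>)/(\<alpha>*Dd \<sigma> \<mu>) > 0 \<and> 1-\<beta>-\<mu> \<noteq> 0 \<and> \<alpha> \<noteq> 0)"
    using m a D by (cases "\<beta> = 0") auto
  have "1/\<mu> + 1/Dd \<sigma> \<mu> + \<beta>/(1-\<beta>-\<mu>) > 0" "1/Dd \<sigma> \<mu> + \<beta>/(1-\<beta>-\<mu>) > 0"
  proof -
    have "1/\<mu> > 0" "1/Dd \<sigma> \<mu> > 0" using m(1) D by auto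
    then show "1/\<mu> + 1/Dd \<sigma> \<mu> + \<beta>/(1-\<beta>-\<mu>) > 0" "1/Dd \<sigma> \<mu> + \<beta>/(1-\<beta>-\<mu>) > 0" using s by linarith+
  qed
  moreover have "\<alpha>*(1-\<beta>*\<sigma>) > 0" using a by simp
  moreover have "\<not> \<alpha>*(1-\<beta>*\<sigma>) < 0" using a by (simp add: not_less)
  moreover have "(1-\<beta>*\<sigma>)/Dd \<sigma> \<mu> > 0" "Dd \<sigma> \<mu> \<noteq> 0" using a D by auto
  ultimately show ?thesis unfolding facts_def using m(1) D a f4 by blast
qed





lemma facts_1b:
  assumes c: "case1b \<alpha> \<beta> \<sigma>" and I: "\<mu> \<in> Iset \<alpha> \<beta> \<sigma>"
  shows "facts \<alpha> \<beta> \<sigma> \<mu> \<and> Dd \<sigma> \<mu> < 0"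
proof -
  have a: "\<alpha> > 0" "1 - \<beta>*\<sigma> < 0" "0 < \<beta>" "\<beta> \<le> 1" using c by (auto simp: case1b_def)
  have sg: "\<sigma> > 1"
  proof (rule ccontr)
    assume "\<not> \<sigma> > 1"
    then have "\<beta>*\<sigma> \<le> \<beta>*1" using a by (intro mult_left_mono) auto
    then show False using a by linarith
  qed
  have n1a: "\<not> case1a \<alpha> \<beta> \<sigma>" using a by (auto simp: case1a_def)
  have m: "\<mu> > 1 - \<beta>" "\<mu> > 0" "\<mu> < (\<sigma>-1)/\<sigma>"
    using I c a n1a unfolding Iset_def by (auto split: if_splits)
  have D: "Dd \<sigma> \<mu> < 0"
  proof -
    have "\<sigma> * \<mu> < \<sigma> - 1" using m(3) sg by (simp add: field_simps)
    then show ?thesis by (simp add: Dd_def algebra_simps)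
  qed
  have s: "1 - \<beta> - \<mu> < 0" using m by simp
  have f4: "(1-\<beta>-\<mu>)/(\<alpha>*Dd \<sigma> \<mu>) > 0" using s a D by (simp add: divide_neg_neg mult_pos_neg)
  have f3: "(1-\<beta>*\<sigma>)/Dd \<sigma> \<mu> > 0" using a D by (simp add: divide_neg_neg)
  define cc where "cc = (1-\<beta>)*\<sigma>+1"
  define N where "N = - ((1-\<beta>)*\<sigma>+1)*(1-\<mu>)^2 + 2*(1-\<mu>) - \<beta>"
  have ccp: "cc > 0"
  proof -
    have "(1-\<beta>)*\<sigma> \<ge> 0" using sg a by (intro mult_nonneg_nonneg) auto
    then show ?thesis unfolding cc_def by linarith
  qed
  have Nn: "N < 0"
  proof (cases "\<beta> = 1")
    case True
    then have "N = - (\<mu> ^ 2)" unfolding N_def by (simp add: power2_eq_square algebra_simps)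
    then show ?thesis using m(2) by simp
  next
    case False
    have "cc * N = (1-\<beta>)*(1-\<beta>*\<sigma>) - (cc*(1-\<mu>) - 1)^2" unfolding cc_def N_def by algebra
    moreover have "(1-\<beta>)*(1-\<beta>*\<sigma>) < 0" using False a by (simp add: mult_pos_neg)
    moreover have "(cc*(1-\<mu>) - 1)^2 \<ge> 0" by (rule zero_le_power2)
    ultimately have "cc * N < 0" by linarith
    then show ?thesis using ccp by (simp add: mult_less_0_iff)
  qed
  have Hp: "1/\<mu> + 1/Dd \<sigma> \<mu> + \<beta>/(1-\<beta>-\<mu>) = N / (\<mu>*(1-\<beta>-\<mu>)*Dd \<sigma> \<mu>)"
    unfolding N_def using Hp_eq m(2) D s by auto
  have den: "\<mu>*(1-\<beta>-\<mu>)*Dd \<sigma> \<mu> > 0"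
  proof -
    have "(1-\<beta>-\<mu>)*Dd \<sigma> \<mu> > 0" using s D by (rule mult_neg_neg)
    then show ?thesis using m(2) by (simp add: mult.assoc)
  qed
  have neg: "1/\<mu> + 1/Dd \<sigma> \<mu> + \<beta>/(1-\<beta>-\<mu>) < 0" unfolding Hp using Nn den by (simp add: divide_neg_pos)
  have pr: "\<alpha>*(1-\<beta>*\<sigma>) < 0" "\<not> \<alpha>*(1-\<beta>*\<sigma>) > 0" using a by (simp_all add: mult_pos_neg not_less mult_pos_neg[THEN less_imp_le])
  show ?thesis unfolding facts_def using m(2) D f3 f4 s neg pr by auto
qed


lemma facts_2b:
  assumes c: "case2b \<alpha> \<beta> \<sigma>" and I: "\<mu> \<in> Iset \<alpha> \<beta> \<sigma>"
  shows "facts \<alpha> \<beta> \<sigma> \<mu> \<and> Dd \<sigma> \<mu> < 0"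
proof -
  have a: "\<alpha> < 0" "1 - \<beta>*\<sigma> < 0" "0 < \<beta>" "\<beta> < 1" using c by (auto simp: case2b_def)
  have sg: "\<sigma> > 1"
  proof (rule ccontr)
    assume "\<not> \<sigma> > 1"
    then have "\<beta>*\<sigma> \<le> \<beta>*1" using a by (intro mult_left_mono) auto
    then show False using a by linarith
  qed
  have n: "\<not> case1a \<alpha> \<beta> \<sigma>" "\<not> case1b \<alpha> \<beta> \<sigma>" "\<not> case2a \<alpha> \<beta> \<sigma>" using a by (auto simp: case1a_def case1b_def case2a_def)
  have m: "\<mu> > 0" "\<mu> < 1 - \<beta>"
    using I c n unfolding Iset_def by (auto split: if_splits)
  have D: "Dd \<sigma> \<mu> < 0"
  proof -
    have "\<sigma> * (1 - \<mu>) > \<sigma> * \<beta>" using m sg by simp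
    then show ?thesis using a by (simp add: Dd_def algebra_simps)
  qed
  have s: "1 - \<beta> - \<mu> > 0" using m by simp
  have f4: "(1-\<beta>-\<mu>)/(\<alpha>*Dd \<sigma> \<mu>) > 0" using s a D by (simp add: mult_neg_neg)
  have f3: "(1-\<beta>*\<sigma>)/Dd \<sigma> \<mu> > 0" using a D by (simp add: divide_neg_neg)
  define cc where "cc = (1-\<beta>)*\<sigma>+1"
  define N where "N = - ((1-\<beta>)*\<sigma>+1)*(1-\<mu>)^2 + 2*(1-\<mu>) - \<beta>"
  have ccp: "cc > 0"
  proof -
    have "(1-\<beta>)*\<sigma> \<ge> 0" using sg a by (intro mult_nonneg_nonneg) auto
    then show ?thesis unfolding cc_def by linarith
  qed
  have Nn: "N < 0"
  proof -
    have "cc * N = (1-\<beta>)*(1-\<beta>*\<sigma>) - (cc*(1-\<mu>) - 1)^2" unfolding cc_def N_def by algebra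
    moreover have "(1-\<beta>)*(1-\<beta>*\<sigma>) < 0" using a by (simp add: mult_pos_neg)
    moreover have "(cc*(1-\<mu>) - 1)^2 \<ge> 0" by (rule zero_le_power2)
    ultimately have "cc * N < 0" by linarith
    then show ?thesis using ccp by (simp add: mult_less_0_iff)
  qed
  have Hp: "1/\<mu> + 1/Dd \<sigma> \<mu> + \<beta>/(1-\<beta>-\<mu>) = N / (\<mu>*(1-\<beta>-\<mu>)*Dd \<sigma> \<mu>)"
    unfolding N_def using Hp_eq m(1) D s by auto
  have den: "\<mu>*(1-\<beta>-\<mu>)*Dd \<sigma> \<mu> < 0"
  proof -
    have "(1-\<beta>-\<mu>)*Dd \<sigma> \<mu> < 0" using s D by (rule mult_pos_neg)
    then show ?thesis using m(1) by (simp add: mult.assoc mult_pos_neg)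
  qed
  have pos: "1/\<mu> + 1/Dd \<sigma> \<mu> + \<beta>/(1-\<beta>-\<mu>) > 0" unfolding Hp using Nn den by (simp add: divide_neg_neg)
  have H2: "1/Dd \<sigma> \<mu> + \<beta>/(1-\<beta>-\<mu>) = (1-\<beta>*\<sigma>)*(1-\<mu>) / ((1-\<beta>-\<mu>)*Dd \<sigma> \<mu>)"
    using H2p_eq D s by auto
  have pos2: "1/Dd \<sigma> \<mu> + \<beta>/(1-\<beta>-\<mu>) > 0" unfolding H2
    using a m s D by (intro divide_neg_neg mult_neg_pos mult_pos_neg) auto
  have pr: "\<alpha>*(1-\<beta>*\<sigma>) > 0" "\<not> \<alpha>*(1-\<beta>*\<sigma>) < 0" using a by (simp_all add: mult_neg_neg not_less mult_neg_neg[THEN less_imp_le])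
  show ?thesis unfolding facts_def using m(1) D f3 f4 s pos pos2 pr by auto
qed



lemma facts_2a:
  assumes c: "case2a \<alpha> \<beta> \<sigma>" and I: "\<mu> \<in> Iset \<alpha> \<beta> \<sigma>"
  shows "facts \<alpha> \<beta> \<sigma> \<mu> \<and> Dd \<sigma> \<mu> > 0"
proof -
  have a: "\<alpha> < 0" "1 - \<beta>*\<sigma> > 0" "0 < \<beta>" "\<beta> < 1" using c by (auto simp: case2a_def)
  have n: "\<not> case1a \<alpha> \<beta> \<sigma>" "\<not> case1b \<alpha> \<beta> \<sigma>" using a by (auto simp: case1a_def case1b_def)
  have m: "\<mu> > 1 - \<beta>" "\<mu> < mubar \<beta> \<sigma>"
    using I c n unfolding Iset_def by (auto split: if_splits)
  define cc where "cc = (1-\<beta>)*\<sigma>+1"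
  define \<Delta> where "\<Delta> = sqrt ((1-\<beta>)*(1-\<beta>*\<sigma>))"
  define t where "t = 1 - \<mu>"
  define t0 where "t0 = (1 - \<Delta>)/cc"
  have pp: "(1-\<beta>)*(1-\<beta>*\<sigma>) > 0" using a by simp
  have Dp: "\<Delta> > 0" unfolding \<Delta>_def using pp by simp
  have D2: "\<Delta>^2 = 1 - \<beta>*cc" unfolding \<Delta>_def cc_def using pp by (simp add: algebra_simps)
  have ccnz: "cc \<noteq> 0"
  proof
    assume "cc = 0"
    then have "mubar \<beta> \<sigma> = 0" unfolding mubar_def cc_def by simp
    then show False using m a by simp
  qed
  have mb: "mubar \<beta> \<sigma> = 1 - t0" unfolding mubar_def t0_def \<Delta>_def using ccnz unfolding cc_def
    by (simp add: field_simps)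
  have tt0: "t > t0" using m(2) mb unfolding t_def by simp
  have tb: "t < \<beta>" using m(1) unfolding t_def by simp
  have t0p: "t0 > 0"
  proof (cases "cc > 0")
    case True
    have "\<Delta>^2 < 1" using D2 True a by simp
    then have "\<Delta> < 1" using Dp by (smt (verit) one_le_power)
    then show ?thesis unfolding t0_def using True by simp
  next
    case False
    then have cn: "cc < 0" using ccnz by simp
    have "\<Delta>^2 > 1" using D2 cn a by (simp add: mult_pos_neg)
    then have "\<Delta> > 1" using Dp by (smt (verit) power_le_one)
    then show ?thesis unfolding t0_def using cn by (simp add: divide_neg_neg)
  qed
  have tp: "t > 0" using tt0 t0p by simp
  have D: "Dd \<sigma> \<mu> > 0"
  proof (cases "\<sigma> \<ge> 0")
    case True
    have "\<sigma> * t \<le> \<sigma> * \<beta>" using True tb by (intro mult_left_mono) auto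
    then show ?thesis using a unfolding Dd_def t_def by (simp add: algebra_simps)
  next
    case False
    have "\<sigma> * t < 0" using False tp by (simp add: mult_neg_pos)
    then show ?thesis unfolding Dd_def t_def by simp
  qed
  have mp: "\<mu> > 0" using m(1) a by simp
  have s: "1 - \<beta> - \<mu> < 0" using m by simp
  have f4: "(1-\<beta>-\<mu>)/(\<alpha>*Dd \<sigma> \<mu>) > 0" using s a D by (simp add: divide_neg_neg mult_neg_pos)
  have f3: "(1-\<beta>*\<sigma>)/Dd \<sigma> \<mu> > 0" using a D by simp
  define N where "N = - ((1-\<beta>)*\<sigma>+1)*(1-\<mu>)^2 + 2*(1-\<mu>) - \<beta>"
  have ct0: "cc * t0 = 1 - \<Delta>" unfolding t0_def using ccnz by simp
  have t0b: "t0 * (1 + \<Delta>) = \<beta>"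
  proof -
    have "t0 * (1 + \<Delta>) = (1 - \<Delta>^2) / cc" unfolding t0_def by (simp add: power2_eq_square algebra_simps)
    also have "\<dots> = \<beta>" using D2 ccnz by simp
    finally show ?thesis .
  qed
  have Neq: "N = (t - t0) * (1 + \<Delta> - cc*t)"
  proof -
    have "(t - t0) * (1 + \<Delta> - cc*t) = t + t*\<Delta> - cc*t^2 - t0*(1+\<Delta>) + t*(cc*t0)"
      by (simp add: algebra_simps power2_eq_square)
    also have "\<dots> = 2*t - cc*t^2 - \<beta>"
    proof -
      have e1: "t*(cc*t0) = t - t*\<Delta>" unfolding ct0 by (simp add: algebra_simps)
      show ?thesis unfolding e1 t0b by linarith
    qed
    also have "\<dots> = N" unfolding N_def cc_def t_def by algebra
    finally show ?thesis by simp
  qed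
  have pos2: "1 + \<Delta> - cc*t > 0"
  proof (cases "cc > 0")
    case True
    have "cc * t < cc * \<beta>" using True tb by simp
    moreover have "cc * \<beta> = 1 - \<Delta>^2" using D2 by (simp add: algebra_simps)
    moreover have "\<Delta>^2 \<ge> 0" by simp
    ultimately show ?thesis using Dp by (simp add: power2_eq_square) (smt (verit) mult_pos_pos)
  next
    case False
    then have cn: "cc < 0" using ccnz by simp
    have "cc * t < cc * t0" using cn tt0 by simp
    then show ?thesis using ct0 Dp by simp
  qed
  have Np: "N > 0" unfolding Neq using tt0 pos2 by simp
  have Hp: "1/\<mu> + 1/Dd \<sigma> \<mu> + \<beta>/(1-\<beta>-\<mu>) = N / (\<mu>*(1-\<beta>-\<mu>)*Dd \<sigma> \<mu>)"
    unfolding N_def using Hp_eq mp D s by auto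
  have den: "\<mu>*(1-\<beta>-\<mu>)*Dd \<sigma> \<mu> < 0"
  proof -
    have "\<mu>*(1-\<beta>-\<mu>) < 0" using mp s by (rule mult_pos_neg)
    then show ?thesis using D by (simp add: mult_neg_pos)
  qed
  have neg: "1/\<mu> + 1/Dd \<sigma> \<mu> + \<beta>/(1-\<beta>-\<mu>) < 0" unfolding Hp using Np den by (simp add: divide_pos_neg)
  have pr: "\<alpha>*(1-\<beta>*\<sigma>) < 0" "\<not> \<alpha>*(1-\<beta>*\<sigma>) > 0" using a by (simp_all add: mult_neg_pos not_less mult_neg_pos[THEN less_imp_le])
  show ?thesis unfolding facts_def using mp D f3 f4 s neg pr by auto
qed


lemma Iset_conv: "x \<in> Iset \<alpha> \<beta> \<sigma> \<Longrightarrow> z \<in> Iset \<alpha> \<beta> \<sigma> \<Longrightarrow> x \<le> y \<Longrightarrow> y \<le> z \<Longrightarrow> y \<in> Iset \<alpha> \<beta> \<sigma>"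
  unfolding Iset_def by (auto split: if_splits)

lemma facts_all:
  assumes "prop4_setting \<alpha> \<beta> \<sigma>" "\<mu> \<in> Iset \<alpha> \<beta> \<sigma>"
  shows "facts \<alpha> \<beta> \<sigma> \<mu>"
  using assms facts_1a facts_1b facts_2a facts_2b unfolding prop4_setting_def by blast

lemma Dsign:
  assumes "prop4_setting \<alpha> \<beta> \<sigma>" "x \<in> Iset \<alpha> \<beta> \<sigma>" "y \<in> Iset \<alpha> \<beta> \<sigma>"
  shows "Dd \<sigma> x * Dd \<sigma> y > 0"
proof -
  have "(Dd \<sigma> x > 0 \<and> Dd \<sigma> y > 0) \<or> (Dd \<sigma> x < 0 \<and> Dd \<sigma> y < 0)"
    using assms facts_1a facts_1b facts_2a facts_2b unfolding prop4_setting_def by blast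
  then show ?thesis by (auto intro: mult_pos_pos mult_neg_neg)
qed

lemma prod_nz:
  assumes "prop4_setting \<alpha> \<beta> \<sigma>"
  shows "\<alpha> \<noteq> 0" "1 - \<beta>*\<sigma> \<noteq> 0"
  using assms unfolding prop4_setting_def case1a_def case1b_def case2a_def case2b_def by auto



lemma q_diff:
  assumes "\<alpha> \<noteq> 0" "Dd \<sigma> x \<noteq> 0" "Dd \<sigma> y \<noteq> 0"
  shows "qfun \<alpha> \<beta> \<sigma> y - qfun \<alpha> \<beta> \<sigma> x = (x - y) * (1 - \<beta>*\<sigma>) / (\<alpha> * (Dd \<sigma> x * Dd \<sigma> y))"
proof -
  have key: "(1-\<beta>-y)*(1-\<sigma>*(1-x)) - (1-\<beta>-x)*(1-\<sigma>*(1-y)) = (x-y)*(1-\<beta>*\<sigma>)" by algebra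
  have gen: "\<And>dx dy a b. dx \<noteq> 0 \<Longrightarrow> dy \<noteq> 0 \<Longrightarrow> a / (\<alpha> * dy) - b / (\<alpha> * dx) = (a * dx - b * dy) / (\<alpha> * (dx * dy))"
    using assms(1) by (simp add: field_simps)
  show ?thesis unfolding qfun_def using gen[OF assms(2,3)[unfolded Dd_def], of "1-\<beta>-y" "1-\<beta>-x"] key
    unfolding Dd_def by simp
qed


lemma part1:
  fixes \<alpha> \<beta> \<sigma> K \<nu> m1 m2 \<mu>1 \<mu>2 :: real
  assumes P: "prop4_setting \<alpha> \<beta> \<sigma>" and I1: "\<mu>1 \<in> Iset \<alpha> \<beta> \<sigma>" and I2: "\<mu>2 \<in> Iset \<alpha> \<beta> \<sigma>"
    and K: "K > 0" and nu: "\<nu> > 0" and m: "0 < m1" "m1 < m2"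
    and G1: "Gfun \<alpha> \<beta> \<sigma> \<mu>1 = \<nu> * m1 / K" and G2: "Gfun \<alpha> \<beta> \<sigma> \<mu>2 = \<nu> * m2 / K"
  shows "(\<alpha> * (1 - \<beta> * \<sigma>) > 0 \<longrightarrow> 1 / \<mu>2 < 1 / \<mu>1) \<and>
         (\<alpha> * (1 - \<beta> * \<sigma>) < 0 \<longrightarrow> 1 / \<mu>1 < 1 / \<mu>2) \<and>
         m1 / \<mu>1 < m2 / \<mu>2 \<and>
         qfun \<alpha> \<beta> \<sigma> \<mu>2 < qfun \<alpha> \<beta> \<sigma> \<mu>1"
proof -
  define S where "S = Iset \<alpha> \<beta> \<sigma>"
  have conv: "\<And>x y z. x\<in>S \<Longrightarrow> z\<in>S \<Longrightarrow> x\<le>y \<Longrightarrow> y\<le>z \<Longrightarrow> y\<in>S"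
    unfolding S_def by (rule Iset_conv)
  have F: "\<And>\<mu>. \<mu> \<in> S \<Longrightarrow> facts \<alpha> \<beta> \<sigma> \<mu>" unfolding S_def using P facts_all by blast
  have Geq: "\<And>\<mu>. \<mu> \<in> S \<Longrightarrow> Gfun \<alpha> \<beta> \<sigma> \<mu> = exp (Hf \<alpha> \<beta> \<sigma> \<mu>)"
  proof -
    fix \<mu> assume "\<mu> \<in> S"
    then have f: "facts \<alpha> \<beta> \<sigma> \<mu>" by (rule F)
    show "Gfun \<alpha> \<beta> \<sigma> \<mu> = exp (Hf \<alpha> \<beta> \<sigma> \<mu>)"
      by (rule G_eq) (use f in \<open>auto simp: facts_def\<close>)
  qed
  define Hp where "Hp = (\<lambda>\<mu>. 1/\<mu> + 1 / Dd \<sigma> \<mu> + \<beta> / (1 - \<beta> - \<mu>))"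
  have Hd: "\<And>\<mu>. \<mu> \<in> S \<Longrightarrow> DERIV (Hf \<alpha> \<beta> \<sigma>) \<mu> :> Hp \<mu>"
  proof -
    fix \<mu> assume "\<mu> \<in> S"
    then have f: "facts \<alpha> \<beta> \<sigma> \<mu>" by (rule F)
    show "DERIV (Hf \<alpha> \<beta> \<sigma>) \<mu> :> Hp \<mu>" unfolding Hp_def
      by (rule H_deriv) (use f in \<open>auto simp: facts_def\<close>)
  qed
  have H2d: "\<And>\<mu>. \<mu> \<in> S \<Longrightarrow> DERIV (\<lambda>x. Hf \<alpha> \<beta> \<sigma> x - ln x) \<mu> :> Hp \<mu> - 1/\<mu>"
  proof -
    fix \<mu> assume a: "\<mu> \<in> S"
    then have f: "facts \<alpha> \<beta> \<sigma> \<mu>" by (rule F)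
    then have "\<mu> > 0" by (simp add: facts_def)
    then show "DERIV (\<lambda>x. Hf \<alpha> \<beta> \<sigma> x - ln x) \<mu> :> Hp \<mu> - 1/\<mu>"
      by (intro DERIV_diff Hd[OF a] DERIV_ln_divide)
  qed
  have pos1: "\<And>x. x \<in> S \<Longrightarrow> x > 0" using F by (simp add: facts_def)
  have S1: "\<mu>1 \<in> S" "\<mu>2 \<in> S" using I1 I2 S_def by auto
  have GG: "Gfun \<alpha> \<beta> \<sigma> \<mu>1 < Gfun \<alpha> \<beta> \<sigma> \<mu>2" unfolding G1 G2 using K nu m
    by (simp add: divide_strict_right_mono)
  have HH: "Hf \<alpha> \<beta> \<sigma> \<mu>1 < Hf \<alpha> \<beta> \<sigma> \<mu>2" using GG Geq S1 by simp
  have nz: "\<alpha> \<noteq> 0" "1 - \<beta>*\<sigma> \<noteq> 0" using prod_nz[OF P] by auto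
  have DD: "Dd \<sigma> \<mu>1 * Dd \<sigma> \<mu>2 > 0" using Dsign[OF P I1 I2] .
  have Dnz: "Dd \<sigma> \<mu>1 \<noteq> 0" "Dd \<sigma> \<mu>2 \<noteq> 0" using DD by auto
  have qd: "qfun \<alpha> \<beta> \<sigma> \<mu>2 - qfun \<alpha> \<beta> \<sigma> \<mu>1 = (\<mu>1 - \<mu>2) * ((1 - \<beta>*\<sigma>) / (\<alpha> * (Dd \<sigma> \<mu>1 * Dd \<sigma> \<mu>2)))"
    using q_diff[OF nz(1) Dnz] by simp
  have rr: "(1 - \<beta>*\<sigma>) / (\<alpha> * (Dd \<sigma> \<mu>1 * Dd \<sigma> \<mu>2)) = (\<alpha> * (1 - \<beta>*\<sigma>)) / (\<alpha>^2 * (Dd \<sigma> \<mu>1 * Dd \<sigma> \<mu>2))"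
    using nz(1) by (simp add: power2_eq_square)
  have a2: "\<alpha>^2 * (Dd \<sigma> \<mu>1 * Dd \<sigma> \<mu>2) > 0" using nz(1) DD by simp
  have mp: "\<mu>1 > 0" "\<mu>2 > 0" using pos1 S1 by auto
  show ?thesis
  proof (cases "\<alpha> * (1 - \<beta> * \<sigma>) > 0")
    case True
    have Hpos: "\<And>x. x \<in> S \<Longrightarrow> Hp x > 0" using F True by (simp add: facts_def Hp_def)
    have H2pos: "\<And>x. x \<in> S \<Longrightarrow> Hp x - 1/x > 0" using F True by (simp add: facts_def Hp_def)
    have lt: "\<mu>1 < \<mu>2"
    proof (rule ccontr)
      assume "\<not> \<mu>1 < \<mu>2"
      then consider "\<mu>1 = \<mu>2" | "\<mu>2 < \<mu>1" by linarith
      then show False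
      proof cases
        case 1 then show False using HH by simp
      next
        case 2
        have "Hf \<alpha> \<beta> \<sigma> \<mu>2 < Hf \<alpha> \<beta> \<sigma> \<mu>1"
          by (rule strict_mono_deriv[of S "Hf \<alpha> \<beta> \<sigma>" Hp, OF conv Hd Hpos S1(2) S1(1) 2])
        then show False using HH by simp
      qed
    qed
    have H2: "Hf \<alpha> \<beta> \<sigma> \<mu>1 - ln \<mu>1 < Hf \<alpha> \<beta> \<sigma> \<mu>2 - ln \<mu>2"
      using strict_mono_deriv[of S "\<lambda>x. Hf \<alpha> \<beta> \<sigma> x - ln x" "\<lambda>x. Hp x - 1/x", OF conv H2d H2pos S1 lt]
      by simp
    have pe: "\<And>mm \<mu>. \<mu> \<in> S \<Longrightarrow> Gfun \<alpha> \<beta> \<sigma> \<mu> = \<nu> * mm / K \<Longrightarrow> mm / \<mu> = K / \<nu> * exp (Hf \<alpha> \<beta> \<sigma> \<mu> - ln \<mu>)"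
    proof -
      fix mm \<mu> assume a: "\<mu> \<in> S" "Gfun \<alpha> \<beta> \<sigma> \<mu> = \<nu> * mm / K"
      then have "mm = K / \<nu> * exp (Hf \<alpha> \<beta> \<sigma> \<mu>)" using Geq K nu by (simp add: field_simps)
      moreover have "exp (Hf \<alpha> \<beta> \<sigma> \<mu> - ln \<mu>) = exp (Hf \<alpha> \<beta> \<sigma> \<mu>) / \<mu>" using pos1[OF a(1)] by (simp add: exp_diff)
      ultimately show "mm / \<mu> = K / \<nu> * exp (Hf \<alpha> \<beta> \<sigma> \<mu> - ln \<mu>)" by simp
    qed
    have p: "m1 / \<mu>1 < m2 / \<mu>2" unfolding pe[OF S1(1) G1] pe[OF S1(2) G2]
    proof -
      have "exp (Hf \<alpha> \<beta> \<sigma> \<mu>1 - ln \<mu>1) < exp (Hf \<alpha> \<beta> \<sigma> \<mu>2 - ln \<mu>2)" using H2 by simp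
      moreover have "K / \<nu> > 0" using K nu by simp
      ultimately show "K / \<nu> * exp (Hf \<alpha> \<beta> \<sigma> \<mu>1 - ln \<mu>1) < K / \<nu> * exp (Hf \<alpha> \<beta> \<sigma> \<mu>2 - ln \<mu>2)"
        by (rule mult_strict_left_mono)
    qed
    have "(1 - \<beta>*\<sigma>) / (\<alpha> * (Dd \<sigma> \<mu>1 * Dd \<sigma> \<mu>2)) > 0" unfolding rr using True a2 by simp
    then have "(\<mu>1 - \<mu>2) * ((1 - \<beta>*\<sigma>) / (\<alpha> * (Dd \<sigma> \<mu>1 * Dd \<sigma> \<mu>2))) < 0"
      using lt by (intro mult_neg_pos) auto
    then have q: "qfun \<alpha> \<beta> \<sigma> \<mu>2 < qfun \<alpha> \<beta> \<sigma> \<mu>1" using qd by linarith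
    have i: "1 / \<mu>2 < 1 / \<mu>1" using lt mp by (simp add: frac_less2)
    show ?thesis using True i p q by auto
  next
    case False
    then have Fn: "\<alpha> * (1 - \<beta> * \<sigma>) < 0" using nz by (simp add: not_less le_less)
    have Hneg: "\<And>x. x \<in> S \<Longrightarrow> Hp x < 0" using F Fn by (simp add: facts_def Hp_def)
    have lt: "\<mu>2 < \<mu>1"
    proof (rule ccontr)
      assume "\<not> \<mu>2 < \<mu>1"
      then consider "\<mu>1 = \<mu>2" | "\<mu>1 < \<mu>2" by linarith
      then show False
      proof cases
        case 1 then show False using HH by simp
      next
        case 2
        have "Hf \<alpha> \<beta> \<sigma> \<mu>2 < Hf \<alpha> \<beta> \<sigma> \<mu>1"
          by (rule strict_anti_deriv[of S "Hf \<alpha> \<beta> \<sigma>" Hp, OF conv Hd Hneg S1(1) S1(2) 2])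
        then show False using HH by simp
      qed
    qed
    have p: "m1 / \<mu>1 < m2 / \<mu>2"
    proof -
      have "m1 / \<mu>1 < m2 / \<mu>1" using m mp by (simp add: divide_strict_right_mono)
      also have "\<dots> < m2 / \<mu>2" using m mp lt by (simp add: frac_less2)
      finally show ?thesis .
    qed
    have "(1 - \<beta>*\<sigma>) / (\<alpha> * (Dd \<sigma> \<mu>1 * Dd \<sigma> \<mu>2)) < 0" unfolding rr using Fn a2 by (simp add: divide_neg_pos)
    then have "(\<mu>1 - \<mu>2) * ((1 - \<beta>*\<sigma>) / (\<alpha> * (Dd \<sigma> \<mu>1 * Dd \<sigma> \<mu>2))) < 0"
      using lt by (intro mult_pos_neg) auto
    then have q: "qfun \<alpha> \<beta> \<sigma> \<mu>2 < qfun \<alpha> \<beta> \<sigma> \<mu>1" using qd by linarith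
    have i: "1 / \<mu>1 < 1 / \<mu>2" using lt mp by (simp add: frac_less2)
    show ?thesis using Fn i p q by auto
  qed
qed




lemma part2:
  fixes \<alpha> \<beta> \<sigma> K \<nu> :: real
  assumes K: "K > 0" and nu: "\<nu> > 0"
    and hyp: "(\<alpha> = 0 \<and> 0 < \<beta> \<and> \<beta> < 1) \<or> (\<sigma> > 1 \<and> \<beta> = 1 / \<sigma>)"
  shows "(let pd = (\<lambda>m::real. if \<alpha> = 0 then m / (1 - \<beta>) else \<sigma> * m / (\<sigma> - 1)) in
        (\<forall>m q. 0 < m \<longrightarrow> 0 < q \<longrightarrow> 1 + \<alpha> * \<sigma> * q > 0 \<longrightarrow>
           m / (uprime K \<alpha> \<beta> \<sigma> q / \<nu>) = 1 - rra \<alpha> \<beta> \<sigma> q \<longrightarrow>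
           uprime K \<alpha> \<beta> \<sigma> q / \<nu> = pd m) \<and>
        (\<forall>m1 m2. 0 < m1 \<longrightarrow> m1 < m2 \<longrightarrow> pd m1 < pd m2) \<and>
        (\<forall>m1 m2 q1 q2. 0 < m1 \<longrightarrow> m1 < m2 \<longrightarrow>
           0 < q1 \<longrightarrow> 1 + \<alpha> * \<sigma> * q1 > 0 \<longrightarrow> uprime K \<alpha> \<beta> \<sigma> q1 = \<nu> * pd m1 \<longrightarrow>
           0 < q2 \<longrightarrow> 1 + \<alpha> * \<sigma> * q2 > 0 \<longrightarrow> uprime K \<alpha> \<beta> \<sigma> q2 = \<nu> * pd m2 \<longrightarrow>
           q2 < q1))"
proof -
  define pd where "pd = (\<lambda>m::real. if \<alpha> = 0 then m / (1 - \<beta>) else \<sigma> * m / (\<sigma> - 1))"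
  have b: "0 < \<beta>" "\<beta> < 1" using hyp by auto
  have pdeq: "\<And>m. pd m = m / (1 - \<beta>)"
  proof -
    fix m
    show "pd m = m / (1 - \<beta>)"
    proof (cases "\<alpha> = 0")
      case True then show ?thesis by (simp add: pd_def)
    next
      case False
      then have s: "\<sigma> > 1" "\<beta> = 1/\<sigma>" using hyp by auto
      have "1 - \<beta> = (\<sigma>-1)/\<sigma>" using s by (simp add: field_simps)
      then show ?thesis unfolding pd_def using False by simp
    qed
  qed
  have rraeq: "\<And>q. 1 + \<alpha> * \<sigma> * q > 0 \<Longrightarrow> rra \<alpha> \<beta> \<sigma> q = \<beta>"
  proof -
    fix q assume q: "1 + \<alpha> * \<sigma> * q > 0"
    show "rra \<alpha> \<beta> \<sigma> q = \<beta>"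
    proof (cases "\<alpha> = 0")
      case True then show ?thesis by (simp add: rra_def)
    next
      case False
      then have s: "\<sigma> > 1" "\<beta> = 1/\<sigma>" using hyp by auto
      have "\<alpha> * q + \<beta> = (\<alpha> * \<sigma> * q + 1) / \<sigma>" using s by (simp add: field_simps)
      then show ?thesis unfolding rra_def using q s by (simp add: add.commute)
    qed
  qed
  have ueq: "\<And>q. 0 < q \<Longrightarrow> 1 + \<alpha> * \<sigma> * q > 0 \<Longrightarrow> uprime K \<alpha> \<beta> \<sigma> q = K * q powr (- \<beta>)"
  proof -
    fix q :: real assume q: "0 < q" "1 + \<alpha> * \<sigma> * q > 0"
    have r2: "rpow q (- \<beta>) = q powr (- \<beta>)" using b by (simp add: rpow_def)
    show "uprime K \<alpha> \<beta> \<sigma> q = K * q powr (- \<beta>)"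
    proof (cases "\<sigma> = 0")
      case True
      then have "\<alpha> = 0" using hyp by auto
      then show ?thesis using True r2 by (simp add: uprime_def)
    next
      case False
      have "rpow (1 + \<alpha> * \<sigma> * q) (\<beta> - 1 / \<sigma>) = 1"
      proof (cases "\<alpha> = 0")
        case True then show ?thesis by (simp add: rpow_def)
      next
        case False
        then have "\<beta> - 1/\<sigma> = 0" using hyp by auto
        then show ?thesis by (simp add: rpow_def)
      qed
      then show ?thesis using False r2 by (simp add: uprime_def)
    qed
  qed
  have c1: "\<forall>m q. 0 < m \<longrightarrow> 0 < q \<longrightarrow> 1 + \<alpha> * \<sigma> * q > 0 \<longrightarrow>
           m / (uprime K \<alpha> \<beta> \<sigma> q / \<nu>) = 1 - rra \<alpha> \<beta> \<sigma> q \<longrightarrow>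
           uprime K \<alpha> \<beta> \<sigma> q / \<nu> = pd m"
  proof (intro allI impI)
    fix m q :: real assume a: "0 < m" "0 < q" "1 + \<alpha> * \<sigma> * q > 0" "m / (uprime K \<alpha> \<beta> \<sigma> q / \<nu>) = 1 - rra \<alpha> \<beta> \<sigma> q"
    then have e: "m / (uprime K \<alpha> \<beta> \<sigma> q / \<nu>) = 1 - \<beta>" using rraeq by simp
    then have nz: "uprime K \<alpha> \<beta> \<sigma> q / \<nu> \<noteq> 0" using b by auto
    show "uprime K \<alpha> \<beta> \<sigma> q / \<nu> = pd m" unfolding pdeq using e nz b
      by (simp add: field_simps)
  qed
  have c2: "\<forall>m1 m2. 0 < m1 \<longrightarrow> m1 < m2 \<longrightarrow> pd m1 < pd m2"
    using b by (auto simp: pdeq divide_strict_right_mono)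
  have c3: "\<forall>m1 m2 q1 q2. 0 < m1 \<longrightarrow> m1 < m2 \<longrightarrow>
           0 < q1 \<longrightarrow> 1 + \<alpha> * \<sigma> * q1 > 0 \<longrightarrow> uprime K \<alpha> \<beta> \<sigma> q1 = \<nu> * pd m1 \<longrightarrow>
           0 < q2 \<longrightarrow> 1 + \<alpha> * \<sigma> * q2 > 0 \<longrightarrow> uprime K \<alpha> \<beta> \<sigma> q2 = \<nu> * pd m2 \<longrightarrow>
           q2 < q1"
  proof (intro allI impI)
    fix m1 m2 q1 q2 :: real
    assume a: "0 < m1" "m1 < m2" "0 < q1" "1 + \<alpha> * \<sigma> * q1 > 0" "uprime K \<alpha> \<beta> \<sigma> q1 = \<nu> * pd m1"
      "0 < q2" "1 + \<alpha> * \<sigma> * q2 > 0" "uprime K \<alpha> \<beta> \<sigma> q2 = \<nu> * pd m2"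
    have "pd m1 < pd m2" using c2 a by blast
    then have "uprime K \<alpha> \<beta> \<sigma> q1 < uprime K \<alpha> \<beta> \<sigma> q2" using a(5,8) nu by simp
    then have "K * q1 powr (- \<beta>) < K * q2 powr (- \<beta>)" using ueq[OF a(3,4)] ueq[OF a(6,7)] by simp
    then have lt: "q1 powr (- \<beta>) < q2 powr (- \<beta>)" using K by simp
    show "q2 < q1"
    proof (rule ccontr)
      assume "\<not> q2 < q1"
      then consider "q1 = q2" | "q1 < q2" by linarith
      then show False
      proof cases
        case 1 then show False using lt by simp
      next
        case 2
        have "q2 powr (- \<beta>) < q1 powr (- \<beta>)" using b a(3) 2 by (intro powr_less_mono2_neg) auto
        then show False using lt by simp
      qed
    qed
  qed
  show ?thesis unfolding Let_def pd_def[symmetric] using c1 c2 c3 by blast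
qed

theorem proposition5:
  fixes \<alpha> \<beta> \<sigma> K \<nu> :: real
  assumes K: "K > 0" and nu: "\<nu> > 0"
  shows
   "(prop4_setting \<alpha> \<beta> \<sigma> \<longrightarrow>
      (\<forall>m1 m2 \<mu>1 \<mu>2. 0 < m1 \<longrightarrow> m1 < m2 \<longrightarrow>
         \<nu> * m1 / K \<in> interior (Xset \<alpha> \<beta> \<sigma>) \<longrightarrow>
         \<nu> * m2 / K \<in> interior (Xset \<alpha> \<beta> \<sigma>) \<longrightarrow>
         \<mu>1 \<in> Iset \<alpha> \<beta> \<sigma> \<longrightarrow> Gfun \<alpha> \<beta> \<sigma> \<mu>1 = \<nu> * m1 / K \<longrightarrow>
         \<mu>2 \<in> Iset \<alpha> \<beta> \<sigma> \<longrightarrow> Gfun \<alpha> \<beta> \<sigma> \<mu>2 = \<nu> * m2 / K \<longrightarrow>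
           (\<alpha> * (1 - \<beta> * \<sigma>) > 0 \<longrightarrow> 1 / \<mu>2 < 1 / \<mu>1) \<and>
           (\<alpha> * (1 - \<beta> * \<sigma>) < 0 \<longrightarrow> 1 / \<mu>1 < 1 / \<mu>2) \<and>
           m1 / \<mu>1 < m2 / \<mu>2 \<and>
           qfun \<alpha> \<beta> \<sigma> \<mu>2 < qfun \<alpha> \<beta> \<sigma> \<mu>1))
    \<and>
    (((\<alpha> = 0 \<and> 0 < \<beta> \<and> \<beta> < 1) \<or> (\<sigma> > 1 \<and> \<beta> = 1 / \<sigma>)) \<longrightarrow>
      (let pd = (\<lambda>m::real. if \<alpha> = 0 then m / (1 - \<beta>) else \<sigma> * m / (\<sigma> - 1)) in
        (\<forall>m q. 0 < m \<longrightarrow> 0 < q \<longrightarrow> 1 + \<alpha> * \<sigma> * q > 0 \<longrightarrow>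
           m / (uprime K \<alpha> \<beta> \<sigma> q / \<nu>) = 1 - rra \<alpha> \<beta> \<sigma> q \<longrightarrow>
           uprime K \<alpha> \<beta> \<sigma> q / \<nu> = pd m) \<and>
        (\<forall>m1 m2. 0 < m1 \<longrightarrow> m1 < m2 \<longrightarrow> pd m1 < pd m2) \<and>
        (\<forall>m1 m2 q1 q2. 0 < m1 \<longrightarrow> m1 < m2 \<longrightarrow>
           0 < q1 \<longrightarrow> 1 + \<alpha> * \<sigma> * q1 > 0 \<longrightarrow> uprime K \<alpha> \<beta> \<sigma> q1 = \<nu> * pd m1 \<longrightarrow>
           0 < q2 \<longrightarrow> 1 + \<alpha> * \<sigma> * q2 > 0 \<longrightarrow> uprime K \<alpha> \<beta> \<sigma> q2 = \<nu> * pd m2 \<longrightarrow>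
           q2 < q1)))"
proof (rule conjI)
  show "prop4_setting \<alpha> \<beta> \<sigma> \<longrightarrow>
      (\<forall>m1 m2 \<mu>1 \<mu>2. 0 < m1 \<longrightarrow> m1 < m2 \<longrightarrow>
         \<nu> * m1 / K \<in> interior (Xset \<alpha> \<beta> \<sigma>) \<longrightarrow>
         \<nu> * m2 / K \<in> interior (Xset \<alpha> \<beta> \<sigma>) \<longrightarrow>
         \<mu>1 \<in> Iset \<alpha> \<beta> \<sigma> \<longrightarrow> Gfun \<alpha> \<beta> \<sigma> \<mu>1 = \<nu> * m1 / K \<longrightarrow>
         \<mu>2 \<in> Iset \<alpha> \<beta> \<sigma> \<longrightarrow> Gfun \<alpha> \<beta> \<sigma> \<mu>2 = \<nu> * m2 / K \<longrightarrow>
           (\<alpha> * (1 - \<beta> * \<sigma>) > 0 \<longrightarrow> 1 / \<mu>2 < 1 / \<mu>1) \<and>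
           (\<alpha> * (1 - \<beta> * \<sigma>) < 0 \<longrightarrow> 1 / \<mu>1 < 1 / \<mu>2) \<and>
           m1 / \<mu>1 < m2 / \<mu>2 \<and>
           qfun \<alpha> \<beta> \<sigma> \<mu>2 < qfun \<alpha> \<beta> \<sigma> \<mu>1)"
    using part1[of \<alpha> \<beta> \<sigma> _ _ K \<nu>] K nu by blast
next
  show "((\<alpha> = 0 \<and> 0 < \<beta> \<and> \<beta> < 1) \<or> (\<sigma> > 1 \<and> \<beta> = 1 / \<sigma>)) \<longrightarrow> (let pd = (\<lambda>m::real. if \<alpha> = 0 then m / (1 - \<beta>) else \<sigma> * m / (\<sigma> - 1)) in
        (\<forall>m q. 0 < m \<longrightarrow> 0 < q \<longrightarrow> 1 + \<alpha> * \<sigma> * q > 0 \<longrightarrow>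
           m / (uprime K \<alpha> \<beta> \<sigma> q / \<nu>) = 1 - rra \<alpha> \<beta> \<sigma> q \<longrightarrow>
           uprime K \<alpha> \<beta> \<sigma> q / \<nu> = pd m) \<and>
        (\<forall>m1 m2. 0 < m1 \<longrightarrow> m1 < m2 \<longrightarrow> pd m1 < pd m2) \<and>
        (\<forall>m1 m2 q1 q2. 0 < m1 \<longrightarrow> m1 < m2 \<longrightarrow>
           0 < q1 \<longrightarrow> 1 + \<alpha> * \<sigma> * q1 > 0 \<longrightarrow> uprime K \<alpha> \<beta> \<sigma> q1 = \<nu> * pd m1 \<longrightarrow>
           0 < q2 \<longrightarrow> 1 + \<alpha> * \<sigma> * q2 > 0 \<longrightarrow> uprime K \<alpha> \<beta> \<sigma> q2 = \<nu> * pd m2 \<longrightarrow>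
           q2 < q1))"
    using part2[OF K nu] by blast
qed


end
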